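(* Let $W_1$, $W_2$ be monotone complete ordered vector spaces, and assume that $W_1$ carries a faithful normal positive linear functional. Then every sequentially normal positive linear map $\phi: W_1\to W_2$ is normal.
   Context: An ordered vector space $W$ is called monotone complete if every non-empty upper bounded upward directed subset of $W$ has a supremum in $W$. A positive linear functional $\psi$ on $W$ is faithful if $\psi(a)>0$ for every positive $a\neq 0$ in $W$. A positive linear map $\phi:W_1\to W_2$ between monotone complete ordered vector spaces is called normal if $\phi(\sup J)=\sup_{j\in J}\phi(j)$ for every non-empty upper bounded upward directed subset $J$ of $W_1$, and sequentially normal if $\phi(\sup_n j_n)=\sup_n\phi(j_n)$ for every upper bounded increasing sequence $(j_n)$ in $W_1$. (A normal positive linear functional is the case $W_2=\mathbb{R}$.) *)

theory Defs
  imports "HOL-Analysis.Analysis"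
begin

text \<open>Ordered vector spaces are modelled by the type class ordered_real_vector
(real vector space with a partial order compatible with addition and
nonnegative scalar multiplication).\<close>

definition ovs_upper_bound :: "'a::order set \<Rightarrow> 'a \<Rightarrow> bool" where
  "ovs_upper_bound A b \<longleftrightarrow> (\<forall>x\<in>A. x \<le> b)"

definition ovs_bounded_above :: "'a::order set \<Rightarrow> bool" where
  "ovs_bounded_above A \<longleftrightarrow> (\<exists>b. ovs_upper_bound A b)"

definition ovs_is_sup :: "'a::order set \<Rightarrow> 'a \<Rightarrow> bool" where
  "ovs_is_sup A s \<longleftrightarrow> ovs_upper_bound A s \<and> (\<forall>b. ovs_upper_bound A b \<longrightarrow> s \<le> b)"

definition ovs_upward_directed :: "'a::order set \<Rightarrow> bool" where
  "ovs_upward_directed A \<longleftrightarrow> (\<forall>x\<in>A. \<forall>y\<in>A. \<exists>z\<in>A. x \<le> z \<and> y \<le> z)"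

definition monotone_complete :: "'a::ordered_real_vector itself \<Rightarrow> bool" where
  "monotone_complete _ \<longleftrightarrow>
     (\<forall>J::'a set. J \<noteq> {} \<and> ovs_upward_directed J \<and> ovs_bounded_above J \<longrightarrow> (\<exists>s. ovs_is_sup J s))"

definition positive_linear_map ::
  "('a::ordered_real_vector \<Rightarrow> 'b::ordered_real_vector) \<Rightarrow> bool" where
  "positive_linear_map \<phi> \<longleftrightarrow> linear \<phi> \<and> (\<forall>a. 0 \<le> a \<longrightarrow> 0 \<le> \<phi> a)"

definition faithful_functional :: "('a::ordered_real_vector \<Rightarrow> real) \<Rightarrow> bool" where
  "faithful_functional \<psi> \<longleftrightarrow> (\<forall>a. 0 \<le> a \<and> a \<noteq> 0 \<longrightarrow> \<psi> a > 0)"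

definition normal_map ::
  "('a::ordered_real_vector \<Rightarrow> 'b::ordered_real_vector) \<Rightarrow> bool" where
  "normal_map \<phi> \<longleftrightarrow>
     (\<forall>J s. J \<noteq> {} \<and> ovs_upward_directed J \<and> ovs_bounded_above J \<and> ovs_is_sup J s
        \<longrightarrow> ovs_is_sup (\<phi> ` J) (\<phi> s))"

definition seq_normal_map ::
  "('a::ordered_real_vector \<Rightarrow> 'b::ordered_real_vector) \<Rightarrow> bool" where
  "seq_normal_map \<phi> \<longleftrightarrow>
     (\<forall>(j::nat \<Rightarrow> 'a) s. incseq j \<and> ovs_bounded_above (range j) \<and> ovs_is_sup (range j) s
        \<longrightarrow> ovs_is_sup (range (\<lambda>n. \<phi> (j n))) (\<phi> s))"

end

theory Submission
  imports Defs
begin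

lemma pos_mono:
  assumes "positive_linear_map f" "x \<le> y"
  shows "f x \<le> f y"
proof -
  have "0 \<le> f (y - x)" using assms unfolding positive_linear_map_def by simp
  moreover have "f (y - x) = f y - f x" using assms(1) unfolding positive_linear_map_def
    by (simp add: linear_diff)
  ultimately show ?thesis by simp
qed

lemma approx_seq:
  fixes J :: "'a::ordered_real_vector set"
  assumes dir: "ovs_upward_directed J" and ne: "J \<noteq> {}"
    and ap: "\<And>n::nat. \<exists>x\<in>J. c - 1 / (real n + 1) < \<psi> x"
  shows "\<exists>k. incseq k \<and> range k \<subseteq> J \<and> (\<forall>n. \<exists>x\<in>J. c - 1 / (real n + 1) < \<psi> x \<and> x \<le> k n)"
proof -
  obtain j where j: "\<And>n. j n \<in> J \<and> c - 1 / (real n + 1) < \<psi> (j n)"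
    using ap by metis
  define k where "k = rec_nat (j 0) (\<lambda>n x. SOME z. z \<in> J \<and> x \<le> z \<and> j (Suc n) \<le> z)"
  have k0: "k 0 = j 0" by (simp add: k_def)
  have kS: "k (Suc n) = (SOME z. z \<in> J \<and> k n \<le> z \<and> j (Suc n) \<le> z)" for n
    by (simp add: k_def)
  have P: "k n \<in> J \<and> j n \<le> k n \<and> k n \<le> k (Suc n)" for n
  proof (induction n)
    case 0
    have "\<exists>z. z \<in> J \<and> k 0 \<le> z \<and> j (Suc 0) \<le> z"
      using dir j[of 0] j[of 1] k0 unfolding ovs_upward_directed_def by (metis One_nat_def)
    from someI_ex[OF this] show ?case using k0 kS[of 0] j[of 0] by simp
  next
    case (Suc n)
    have "\<exists>z. z \<in> J \<and> k n \<le> z \<and> j (Suc n) \<le> z"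
      using dir j[of "Suc n"] Suc unfolding ovs_upward_directed_def by blast
    from someI_ex[OF this] have A: "k (Suc n) \<in> J \<and> k n \<le> k (Suc n) \<and> j (Suc n) \<le> k (Suc n)"
      using kS[of n] by simp
    have "\<exists>z. z \<in> J \<and> k (Suc n) \<le> z \<and> j (Suc (Suc n)) \<le> z"
      using dir j[of "Suc (Suc n)"] A unfolding ovs_upward_directed_def by blast
    from someI_ex[OF this] have "k (Suc n) \<le> k (Suc (Suc n))"
      using kS[of "Suc n"] by simp
    with A show ?case by simp
  qed
  have "incseq k" using P by (simp add: incseq_SucI)
  moreover have "range k \<subseteq> J" using P by auto
  moreover have "\<forall>n. \<exists>x\<in>J. c - 1 / (real n + 1) < \<psi> x \<and> x \<le> k n" using P j by blast
  ultimately show ?thesis by blast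
qed

theorem theorem2:
  fixes \<phi> :: "'a::ordered_real_vector \<Rightarrow> 'b::ordered_real_vector"
  assumes "monotone_complete TYPE('a)"
    and "monotone_complete TYPE('b)"
    and "\<exists>\<psi> :: 'a \<Rightarrow> real. positive_linear_map \<psi> \<and> faithful_functional \<psi> \<and> normal_map \<psi>"
    and "positive_linear_map \<phi>"
    and "seq_normal_map \<phi>"
  shows "normal_map \<phi>"
  unfolding normal_map_def
proof (intro allI impI)
  fix J s assume H: "J \<noteq> {} \<and> ovs_upward_directed J \<and> ovs_bounded_above J \<and> ovs_is_sup J (s::'a)"
  obtain \<psi> :: "'a \<Rightarrow> real" where psi: "positive_linear_map \<psi>" "faithful_functional \<psi>" "normal_map \<psi>"
    using assms(3) by blast
  have supJ: "ovs_is_sup (\<psi> ` J) (\<psi> s)" using psi(3) H unfolding normal_map_def by blast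
  have ap: "\<exists>x\<in>J. \<psi> s - 1 / (real n + 1) < \<psi> x" for n :: nat
  proof (rule ccontr)
    assume "\<not> ?thesis"
    hence "ovs_upper_bound (\<psi> ` J) (\<psi> s - 1 / (real n + 1))"
      unfolding ovs_upper_bound_def by force
    hence "\<psi> s \<le> \<psi> s - 1 / (real n + 1)" using supJ unfolding ovs_is_sup_def by blast
    moreover have "0 < 1 / (real n + 1)" by simp
    ultimately show False by linarith
  qed
  obtain k where k: "incseq k" "range k \<subseteq> J"
    "\<And>n. \<exists>x\<in>J. \<psi> s - 1 / (real n + 1) < \<psi> x \<and> x \<le> k n"
    using approx_seq[OF _ _ ap] H by blast
  have sub: "x \<le> s" if "x \<in> J" for x
    using H that unfolding ovs_is_sup_def ovs_upper_bound_def by blast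
  have kbd: "ovs_upper_bound (range k) s" using k(2) sub unfolding ovs_upper_bound_def by blast
  have "ovs_upward_directed (range k)"
    unfolding ovs_upward_directed_def
  proof (clarify)
    fix m n
    show "\<exists>z\<in>range k. k m \<le> z \<and> k n \<le> z"
      using k(1) by (intro bexI[of _ "k (max m n)"]) (auto simp: incseq_def)
  qed
  then obtain t where t: "ovs_is_sup (range k) t"
    using assms(1) kbd unfolding monotone_complete_def ovs_bounded_above_def by blast
  have ts: "t \<le> s" using t kbd unfolding ovs_is_sup_def by blast
  have "\<psi> s - 1 / (real n + 1) < \<psi> t" for n :: nat
  proof -
    obtain x where x: "x \<in> J" "\<psi> s - 1 / (real n + 1) < \<psi> x" "x \<le> k n" using k(3) by blast
    have "k n \<le> t" using t unfolding ovs_is_sup_def ovs_upper_bound_def by blast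
    hence "\<psi> x \<le> \<psi> t" using x(3) pos_mono[OF psi(1)] order_trans by blast
    with x(2) show ?thesis by linarith
  qed
  hence "\<psi> s \<le> \<psi> t"
  proof -
    assume A: "\<And>n::nat. \<psi> s - 1 / (real n + 1) < \<psi> t"
    show ?thesis
    proof (rule ccontr)
      assume "\<not> ?thesis"
      hence d: "0 < \<psi> s - \<psi> t" by simp
      obtain n :: nat where "1 / (\<psi> s - \<psi> t) < real n" using reals_Archimedean2 by blast
      hence "1 < real n * (\<psi> s - \<psi> t)" using d by (simp add: field_simps)
      hence "1 < (real n + 1) * (\<psi> s - \<psi> t)" using d by (simp add: algebra_simps)
      hence "1 / (real n + 1) < \<psi> s - \<psi> t" by (simp add: field_simps)
      with A[of n] show False by linarith
    qed
  qed
  moreover have "\<psi> (s - t) = \<psi> s - \<psi> t" using psi(1) unfolding positive_linear_map_def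
    by (simp add: linear_diff)
  moreover have "0 \<le> s - t" using ts by simp
  ultimately have "\<not> (0 < \<psi> (s - t))" by linarith
  hence "s - t = 0" using \<open>0 \<le> s - t\<close> psi(2) unfolding faithful_functional_def by blast
  hence "s = t" by simp
  hence ssup: "ovs_is_sup (range k) s" using t by simp
  have phis: "ovs_is_sup (range (\<lambda>n. \<phi> (k n))) (\<phi> s)"
    using assms(5) k(1) kbd ssup unfolding seq_normal_map_def ovs_bounded_above_def by blast
  show "ovs_is_sup (\<phi> ` J) (\<phi> s)"
    unfolding ovs_is_sup_def
  proof (intro conjI allI impI)
    show "ovs_upper_bound (\<phi> ` J) (\<phi> s)"
      using sub pos_mono[OF assms(4)] unfolding ovs_upper_bound_def by blast
  next
    fix b assume "ovs_upper_bound (\<phi> ` J) b"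
    hence "ovs_upper_bound (range (\<lambda>n. \<phi> (k n))) b"
      using k(2) unfolding ovs_upper_bound_def by blast
    thus "\<phi> s \<le> b" using phis unfolding ovs_is_sup_def by blast
  qed
qed

end
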